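(* For every $n\ge 3$, $\beta(P_{2\infty}\,\Box\, C_n)=3$ if $n$ is odd and $\beta(P_{2\infty}\,\Box\, C_n)=4$ if $n$ is even. Moreover, $\{(0,0),(0,\tfrac{n-1}{2}),(1,0)\}$ is a metric basis of $P_{2\infty}\,\Box\, C_n$ when $n$ is odd, and $\{(0,0),(0,\tfrac n2),(0,1),(1,0)\}$ is a metric basis when $n$ is even.
   Context: $P_{2\infty}$ has vertex set $\mathbb Z$ with $i,j$ adjacent iff $|i-j|=1$. $C_n$ has vertex set $\{0,1,\dots,n-1\}$, with $0\le i\le j\le n-1$ adjacent iff $j-i=1$ or $j-i=n-1$. The cartesian product $G\Box H$ has vertex set $V(G)\times V(H)$, where $(a,v)$ is adjacent to $(b,w)$ iff either $a=b$ and $vw\in E(H)$, or $v=w$ and $ab\in E(G)$. A vertex $x$ resolves $u,v$ if $d(u,x)\ne d(v,x)$ (shortest-path distance); a resolving set is a set of vertices resolving every pair of distinct vertices; $\beta$ is the minimum cardinality of a resolving set ($\infty$ if none is finite), and a metric basis is a resolving set of cardinality $\beta$. *)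

theory Defs
  imports Main "HOL-Library.Extended_Nat"
begin

text \<open>A graph is given by a vertex set V and an adjacency relation E (used only on V).\<close>

definition walk :: "'a set \<Rightarrow> ('a \<Rightarrow> 'a \<Rightarrow> bool) \<Rightarrow> 'a list \<Rightarrow> bool" where
  "walk V E xs \<longleftrightarrow> xs \<noteq> [] \<and> set xs \<subseteq> V \<and>
     (\<forall>i. Suc i < length xs \<longrightarrow> E (xs ! i) (xs ! Suc i))"

text \<open>Shortest-path distance (number of edges); \<infinity> if no path exists.\<close>
definition gdist :: "'a set \<Rightarrow> ('a \<Rightarrow> 'a \<Rightarrow> bool) \<Rightarrow> 'a \<Rightarrow> 'a \<Rightarrow> enat" where
  "gdist V E u v = (INF xs \<in> {xs. walk V E xs \<and> hd xs = u \<and> last xs = v}. enat (length xs - 1))"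

definition resolves :: "'a set \<Rightarrow> ('a \<Rightarrow> 'a \<Rightarrow> bool) \<Rightarrow> 'a \<Rightarrow> 'a \<Rightarrow> 'a \<Rightarrow> bool" where
  "resolves V E x u v \<longleftrightarrow> gdist V E u x \<noteq> gdist V E v x"

definition resolving_set :: "'a set \<Rightarrow> ('a \<Rightarrow> 'a \<Rightarrow> bool) \<Rightarrow> 'a set \<Rightarrow> bool" where
  "resolving_set V E W \<longleftrightarrow> W \<subseteq> V \<and>
     (\<forall>u\<in>V. \<forall>v\<in>V. u \<noteq> v \<longrightarrow> (\<exists>x\<in>W. resolves V E x u v))"

definition metric_dim :: "'a set \<Rightarrow> ('a \<Rightarrow> 'a \<Rightarrow> bool) \<Rightarrow> enat" where
  "metric_dim V E = Inf {enat (card W) | W. finite W \<and> resolving_set V E W}"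

definition metric_basis :: "'a set \<Rightarrow> ('a \<Rightarrow> 'a \<Rightarrow> bool) \<Rightarrow> 'a set \<Rightarrow> bool" where
  "metric_basis V E W \<longleftrightarrow> resolving_set V E W \<and> finite W \<and> enat (card W) = metric_dim V E"

definition P2inf_adj :: "int \<Rightarrow> int \<Rightarrow> bool" where
  "P2inf_adj i j \<longleftrightarrow> \<bar>i - j\<bar> = 1"

definition cycle_V :: "nat \<Rightarrow> nat set" where
  "cycle_V n = {0..<n}"

definition cycle_adj :: "nat \<Rightarrow> nat \<Rightarrow> nat \<Rightarrow> bool" where
  "cycle_adj n i j \<longleftrightarrow> i < n \<and> j < n \<and>
     (max i j - min i j = 1 \<or> max i j - min i j = n - 1)"

definition box_adj :: "('a \<Rightarrow> 'a \<Rightarrow> bool) \<Rightarrow> ('b \<Rightarrow> 'b \<Rightarrow> bool) \<Rightarrow> 'a \<times> 'b \<Rightarrow> 'a \<times> 'b \<Rightarrow> bool" where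
  "box_adj EG EH p q \<longleftrightarrow>
     (fst p = fst q \<and> EH (snd p) (snd q)) \<or> (snd p = snd q \<and> EG (fst p) (fst q))"

definition PC_V :: "nat \<Rightarrow> (int \<times> nat) set" where
  "PC_V n = UNIV \<times> cycle_V n"

definition PC_adj :: "nat \<Rightarrow> int \<times> nat \<Rightarrow> int \<times> nat \<Rightarrow> bool" where
  "PC_adj n = box_adj P2inf_adj (cycle_adj n)"

end

theory Submission
  imports Defs
begin


definition cdi :: "nat \<Rightarrow> nat \<Rightarrow> nat \<Rightarrow> int" where
  "cdi n i j = min \<bar>int i - int j\<bar> (int n - \<bar>int i - int j\<bar>)"

definition DD :: "nat \<Rightarrow> int \<times> nat \<Rightarrow> int \<times> nat \<Rightarrow> int" where
  "DD n p q = \<bar>fst p - fst q\<bar> + cdi n (snd p) (snd q)"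

lemma cdi_nonneg: "i < n \<Longrightarrow> j < n \<Longrightarrow> cdi n i j \<ge> 0"
  unfolding cdi_def by auto

lemma cdi_zero: "i < n \<Longrightarrow> j < n \<Longrightarrow> cdi n i j = 0 \<longleftrightarrow> i = j"
  unfolding cdi_def by auto

lemma cdi_sym: "cdi n i j = cdi n j i"
  unfolding cdi_def by auto

lemma cdi_adj: "cycle_adj n i i' \<Longrightarrow> k < n \<Longrightarrow> cdi n i k \<le> cdi n i' k + 1"
  unfolding cdi_def cycle_adj_def by (auto simp: max_def min_def abs_if split: if_splits)

lemma cycle_adj_sym: "cycle_adj n i j = cycle_adj n j i"
  unfolding cycle_adj_def by (auto simp: max_def min_def)

lemma toward:
  assumes "i < n" "j < n" "i \<noteq> j" "n \<ge> 3"
  shows "\<exists>i'<n. cycle_adj n i i' \<and> cdi n i' j = cdi n i j - 1"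
proof (cases "i < j")
  case True
  show ?thesis
  proof (cases "2*(j - i) \<le> n")
    case True
    then show ?thesis using \<open>i<j\<close> assms
      by (intro exI[of _ "i+1"]) (auto simp: cdi_def cycle_adj_def)
  next
    case False
    then show ?thesis using \<open>i<j\<close> assms
      by (intro exI[of _ "if i = 0 then n - 1 else i - 1"]) (auto simp: cdi_def cycle_adj_def)
  qed
next
  case False
  show ?thesis
  proof (cases "2*(i - j) \<le> n")
    case True
    then show ?thesis using \<open>\<not> i<j\<close> assms
      by (intro exI[of _ "i-1"]) (auto simp: cdi_def cycle_adj_def)
  next
    case False
    then show ?thesis using \<open>\<not> i<j\<close> assms
      by (intro exI[of _ "if i = n - 1 then 0 else i + 1"]) (auto simp: cdi_def cycle_adj_def)
  qed
qed



lemma walk_single: "walk V E [x] \<longleftrightarrow> x \<in> V"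
  unfolding walk_def by auto

lemma walk_Cons2: "walk V E (x # y # ys) \<longleftrightarrow> x \<in> V \<and> E x y \<and> walk V E (y # ys)"
proof
  assume w: "walk V E (x # y # ys)"
  have "\<forall>i. Suc i < length (y#ys) \<longrightarrow> E ((y#ys) ! i) ((y#ys) ! Suc i)"
  proof (intro allI impI)
    fix i assume "Suc i < length (y#ys)"
    then have "Suc (Suc i) < length (x#y#ys)" by simp
    with w have "E ((x#y#ys) ! Suc i) ((x#y#ys) ! Suc (Suc i))" unfolding walk_def by blast
    then show "E ((y#ys) ! i) ((y#ys) ! Suc i)" by simp
  qed
  moreover have "E x y" using w unfolding walk_def by force
  ultimately show "x \<in> V \<and> E x y \<and> walk V E (y # ys)" using w unfolding walk_def by auto
next
  assume h: "x \<in> V \<and> E x y \<and> walk V E (y # ys)"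
  show "walk V E (x # y # ys)" unfolding walk_def
  proof (intro conjI allI impI)
    show "set (x # y # ys) \<subseteq> V" using h unfolding walk_def by auto
  next
    fix i assume "Suc i < length (x#y#ys)"
    then show "E ((x # y # ys) ! i) ((x # y # ys) ! Suc i)"
      using h unfolding walk_def by (cases i) auto
  qed simp
qed

lemma DD_nonneg: "snd p < n \<Longrightarrow> snd q < n \<Longrightarrow> DD n p q \<ge> 0"
  unfolding DD_def using cdi_nonneg by (simp add: add_nonneg_nonneg)

lemma PC_V_iff: "p \<in> PC_V n \<longleftrightarrow> snd p < n"
  unfolding PC_V_def cycle_V_def by (cases p) auto

lemma DD_step:
  assumes "PC_adj n p q" "snd v < n"
  shows "DD n p v \<le> DD n q v + 1"
proof -
  obtain a i b j where pq: "p = (a,i)" "q = (b,j)" by (cases p, cases q)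
  from assms(1) consider "a = b" "cycle_adj n i j" | "i = j" "\<bar>a - b\<bar> = 1"
    unfolding pq PC_adj_def box_adj_def P2inf_adj_def by auto
  then show ?thesis
  proof cases
    case 1
    then show ?thesis using cdi_adj[OF 1(2) assms(2)] unfolding pq DD_def by simp
  next
    case 2
    then show ?thesis unfolding pq DD_def by auto
  qed
qed

lemma walk_lower:
  "walk (PC_V n) (PC_adj n) xs \<Longrightarrow> snd v < n \<Longrightarrow> DD n (hd xs) v \<le> int (length xs - 1) + DD n (last xs) v"
proof (induction xs rule: induct_list012)
  case 1 then show ?case by (simp add: walk_def)
next
  case (2 x) then show ?case by simp
next
  case (3 x y zs)
  have w: "x \<in> PC_V n" "PC_adj n x y" "walk (PC_V n) (PC_adj n) (y # zs)"
    using "3.prems"(1) walk_Cons2 by metis+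
  have "DD n x v \<le> DD n y v + 1" using DD_step[OF w(2) "3.prems"(2)] .
  moreover have "DD n y v \<le> int (length (y#zs) - 1) + DD n (last (y#zs)) v"
    using "3.IH"(2)[OF w(3) "3.prems"(2)] by simp
  ultimately show ?case by simp
qed

lemma walk_exists:
  assumes "n \<ge> 3"
  shows "\<And>u. snd u < n \<Longrightarrow> snd v < n \<Longrightarrow> DD n u v = int k \<Longrightarrow>
     \<exists>xs. walk (PC_V n) (PC_adj n) xs \<and> hd xs = u \<and> last xs = v \<and> length xs = k + 1"
proof (induction k)
  case 0
  obtain a i b j where uv: "u = (a,i)" "v = (b,j)" by (cases u, cases v)
  have c0: "cdi n i j \<ge> 0" using cdi_nonneg 0(1,2) uv by simp
  have d0: "\<bar>a - b\<bar> + cdi n i j = 0" using 0(3) uv unfolding DD_def by simp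
  have "a = b" "cdi n i j = 0" using c0 d0 by auto
  then have "u = v" using cdi_zero[of i n j] 0(1,2) uv by simp
  then show ?case using 0 by (intro exI[of _ "[u]"]) (simp add: walk_single PC_V_iff)
next
  case (Suc k)
  obtain a i b j where uv: "u = (a,i)" "v = (b,j)" by (cases u, cases v)
  have "\<exists>u'. snd u' < n \<and> PC_adj n u u' \<and> DD n u' v = int k"
  proof (cases "a = b")
    case True
    have "i \<noteq> j"
    proof
      assume "i = j"
      then have "DD n u v = 0" using True uv unfolding DD_def cdi_def by simp
      then show False using Suc.prems(3) by simp
    qed
    moreover have "i < n" "j < n" using Suc.prems(1,2) uv by auto
    ultimately obtain i' where "i' < n" "cycle_adj n i i'" "cdi n i' j = cdi n i j - 1"
      using toward[of i n j] assms by blast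
    moreover have "DD n (a,i) (b,j) = int (Suc k)" using Suc.prems uv by simp
    ultimately have "DD n (a,i') (b,j) = int k" using True unfolding DD_def by simp
    moreover have "PC_adj n (a,i) (a,i')" using \<open>cycle_adj n i i'\<close>
      unfolding PC_adj_def box_adj_def by simp
    ultimately show ?thesis using uv \<open>i' < n\<close> by (intro exI[of _ "(a,i')"]) simp
  next
    case False
    define a' where "a' = (if a < b then a + 1 else a - 1)"
    have "\<bar>a' - b\<bar> = \<bar>a - b\<bar> - 1" "\<bar>a - a'\<bar> = 1" using False unfolding a'_def by auto
    moreover have "DD n (a,i) (b,j) = int (Suc k)" using Suc.prems uv by simp
    ultimately have "DD n (a',i) (b,j) = int k" unfolding DD_def by simp
    moreover have "PC_adj n (a,i) (a',i)" using \<open>\<bar>a - a'\<bar> = 1\<close>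
      unfolding PC_adj_def box_adj_def P2inf_adj_def by simp
    ultimately show ?thesis using uv Suc.prems by (intro exI[of _ "(a',i)"]) simp
  qed
  then obtain u' where u': "snd u' < n" "PC_adj n u u'" "DD n u' v = int k" by blast
  from Suc.IH[OF u'(1) Suc.prems(2) u'(3)] obtain xs where
    xs: "walk (PC_V n) (PC_adj n) xs" "hd xs = u'" "last xs = v" "length xs = k + 1" by blast
  then obtain ys where ys: "xs = u' # ys" by (cases xs) auto
  have "walk (PC_V n) (PC_adj n) (u # xs)"
    using xs(1) ys u'(2) Suc.prems(1) by (simp add: walk_Cons2 PC_V_iff)
  moreover have "last (u # xs) = v" using xs ys by simp
  ultimately show ?case using xs(4) by (intro exI[of _ "u # xs"]) simp
qed

lemma gdist_eq:
  assumes "n \<ge> 3" "snd u < n" "snd v < n"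
  shows "gdist (PC_V n) (PC_adj n) u v = enat (nat (DD n u v))"
proof -
  let ?S = "{xs. walk (PC_V n) (PC_adj n) xs \<and> hd xs = u \<and> last xs = v}"
  have "DD n u v \<ge> 0" using DD_nonneg assms by auto
  then obtain k where k: "DD n u v = int k" using nonneg_int_cases by blast
  obtain xs where xs: "xs \<in> ?S" "length xs = k + 1" using walk_exists[OF assms(1) assms(2,3) k] by auto
  have "gdist (PC_V n) (PC_adj n) u v \<le> enat (length xs - 1)"
    unfolding gdist_def by (rule INF_lower) (use xs in auto)
  moreover have "enat k \<le> gdist (PC_V n) (PC_adj n) u v"
    unfolding gdist_def
  proof (rule INF_greatest)
    fix ys assume "ys \<in> ?S"
    then have "DD n u v \<le> int (length ys - 1) + DD n v v"
      using walk_lower[of n ys v] assms by auto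
    moreover have "DD n v v = 0" unfolding DD_def cdi_def by simp
    ultimately show "enat k \<le> enat (length ys - 1)" using k by simp
  qed
  ultimately show ?thesis using xs k by simp
qed



lemma side: "\<bar>a::int\<bar> - \<bar>a - 1\<bar> = \<bar>b\<bar> - \<bar>b - 1\<bar> \<Longrightarrow> \<bar>a\<bar> = \<bar>b\<bar> \<Longrightarrow> a = b"
  by arith

lemma odd_f_inj:
  assumes "n = 2*m+1" "i < n" "j < n"
    "cdi n i 0 - cdi n i m = cdi n j 0 - cdi n j m"
  shows "i = j"
  using assms unfolding cdi_def by (auto simp: min_def abs_if split: if_splits) presburger+

lemma even_sum:
  assumes "n = 2*m" "i < n"
  shows "cdi n i 0 + cdi n i m = int m"
  using assms unfolding cdi_def by (auto simp: min_def abs_if split: if_splits)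

lemma even_inj:
  assumes "n = 2*m" "m \<ge> 2" "i < n" "j < n" "cdi n i 0 = cdi n j 0" "cdi n i 1 = cdi n j 1"
  shows "i = j"
  using assms unfolding cdi_def by (auto simp: min_def abs_if split: if_splits)



definition sc :: "nat \<Rightarrow> nat \<Rightarrow> nat" where "sc n i = (if i + 1 = n then 0 else i + 1)"
definition pr :: "nat \<Rightarrow> nat \<Rightarrow> nat" where "pr n i = (if i = 0 then n - 1 else i - 1)"
definition an :: "nat \<Rightarrow> nat \<Rightarrow> nat" where "an n i = (if i < n div 2 then i + n div 2 else i - n div 2)"
definition PP :: "nat \<Rightarrow> nat \<Rightarrow> nat \<Rightarrow> bool" where "PP n i j \<longleftrightarrow> cdi n (sc n i) j + 1 = cdi n i j"

lemma sc_lt: "i < n \<Longrightarrow> sc n i < n" unfolding sc_def by auto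
lemma pr_lt: "i < n \<Longrightarrow> pr n i < n" unfolding pr_def by auto
lemma an_lt: "i < n \<Longrightarrow> an n i < n" unfolding an_def by auto
lemma sc_pr: "n \<ge> 3 \<Longrightarrow> i < n \<Longrightarrow> sc n i \<noteq> pr n i" unfolding sc_def pr_def by auto

lemma cdi_sc: "n \<ge> 3 \<Longrightarrow> i < n \<Longrightarrow> cdi n (sc n i) i = 1"
  unfolding sc_def cdi_def by auto
lemma cdi_pr: "n \<ge> 3 \<Longrightarrow> i < n \<Longrightarrow> cdi n (pr n i) i = 1"
  unfolding pr_def cdi_def by auto
lemma cdi_adj1: "n \<ge> 3 \<Longrightarrow> cycle_adj n i j \<Longrightarrow> cdi n i j = 1"
  unfolding cycle_adj_def cdi_def by (auto simp: max_def min_def split: if_splits)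

lemma cdi_le: "n = 2*m \<Longrightarrow> i < n \<Longrightarrow> j < n \<Longrightarrow> cdi n i j \<le> int m"
  unfolding cdi_def by auto

lemma cdi_m: "n = 2*m \<Longrightarrow> i < n \<Longrightarrow> j < n \<Longrightarrow> cdi n i j = int m \<Longrightarrow> j = an n i"
  unfolding cdi_def an_def by (auto simp: min_def abs_if split: if_splits)

lemma cdi_an: "n = 2*m \<Longrightarrow> i < n \<Longrightarrow> j < n \<Longrightarrow> cdi n i (an n j) + cdi n i j = int m"
  unfolding cdi_def an_def by (auto simp: min_def abs_if split: if_splits)

lemma step_even: "n = 2*m \<Longrightarrow> m \<ge> 2 \<Longrightarrow> i < n \<Longrightarrow> j < n \<Longrightarrow>
   cdi n (sc n i) j = cdi n i j + 1 \<or> PP n i j"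
  unfolding PP_def cdi_def sc_def by (auto simp: min_def abs_if split: if_splits) presburger+

lemma sc_pr_id: "i < n \<Longrightarrow> sc n (pr n i) = i" unfolding sc_def pr_def by auto
lemma cdi_pr_fwd: "n = 2*m \<Longrightarrow> m \<ge> 2 \<Longrightarrow> a < n \<Longrightarrow> b < n \<Longrightarrow>
   (a \<le> b \<and> b - a < m) \<or> (b < a \<and> a - b > m) \<Longrightarrow> cdi n (pr n a) b = cdi n a b + 1"
  unfolding pr_def cdi_def by (auto simp: min_def abs_if split: if_splits)
lemma sc_an: "n = 2*m \<Longrightarrow> m \<ge> 2 \<Longrightarrow> i < n \<Longrightarrow> sc n (an n i) = an n (sc n i)"
  unfolding sc_def an_def by auto

lemma PP_an: assumes "n = 2*m" "m \<ge> 2" "i < n" "j < n"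
  shows "PP n (an n i) j \<longleftrightarrow> \<not> PP n i j"
proof -
  have e1: "cdi n (an n i) j = int m - cdi n i j"
    using cdi_an[OF assms(1) assms(4) assms(3)] cdi_sym by (metis add_diff_cancel_right')
  have e2: "cdi n (an n (sc n i)) j = int m - cdi n (sc n i) j"
    using cdi_an[OF assms(1) assms(4) sc_lt[OF assms(3)]] cdi_sym by (metis add_diff_cancel_right')
  have "PP n (an n i) j \<longleftrightarrow> cdi n (sc n i) j = cdi n i j + 1"
    unfolding PP_def sc_an[OF assms(1-3)] e1 e2 by linarith
  then show ?thesis using step_even[OF assms] unfolding PP_def by linarith
qed

lemma H1: assumes "n = 2*m" "m \<ge> 2" "a < n" "b < n" "(a \<le> b \<and> b - a < m) \<or> (b < a \<and> a - b > m)"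
  shows "\<exists>i<n. PP n i a \<and> PP n i b"
proof (intro exI[of _ "pr n a"] conjI)
  show "pr n a < n" using pr_lt assms by auto
  show "PP n (pr n a) a" unfolding PP_def sc_pr_id[OF assms(3)]
    using cdi_pr[of n a] assms unfolding cdi_def by auto
  show "PP n (pr n a) b" unfolding PP_def sc_pr_id[OF assms(3)]
    using cdi_pr_fwd[OF assms] by simp
qed

lemma H: assumes "n = 2*m" "m \<ge> 2" "a < n" "b < n" "cdi n a b < int m"
  shows "\<exists>i<n. PP n i a \<and> PP n i b"
proof (cases "(a \<le> b \<and> b - a < m) \<or> (b < a \<and> a - b > m)")
  case True
  then show ?thesis using H1 assms by blast
next
  case False
  then have "(b \<le> a \<and> a - b < m) \<or> (a < b \<and> b - a > m)"
    using assms unfolding cdi_def by (auto simp: min_def split: if_splits)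
  then show ?thesis using H1[OF assms(1,2,4,3)] by blast
qed

lemma F2_delta: "n = 2*m \<Longrightarrow> m \<ge> 2 \<Longrightarrow> j < n \<Longrightarrow> k < n \<Longrightarrow>
  cdi n (sc n j) k - cdi n (pr n j) k \<in> {-2, 0, 2}"
  unfolding cdi_def sc_def pr_def by (auto simp: min_def abs_if split: if_splits) presburger+

lemma sc_an_d: "n = 2*m \<Longrightarrow> m \<ge> 2 \<Longrightarrow> j < n \<Longrightarrow> cdi n (sc n j) (an n j) = int m - 1"
  unfolding cdi_def sc_def an_def by (auto simp: min_def abs_if split: if_splits)
lemma pr_an_d: "n = 2*m \<Longrightarrow> m \<ge> 2 \<Longrightarrow> j < n \<Longrightarrow> cdi n (pr n j) (an n j) = int m - 1"
  unfolding cdi_def pr_def an_def by (auto simp: min_def abs_if split: if_splits)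



definition coll :: "nat \<Rightarrow> (int \<times> nat) set \<Rightarrow> int \<times> nat \<Rightarrow> int \<times> nat \<Rightarrow> bool" where
  "coll n W u v \<longleftrightarrow> u \<noteq> v \<and> snd u < n \<and> snd v < n \<and> (\<forall>w\<in>W. DD n u w = DD n v w)"

lemma col_trick:
  assumes "n \<ge> 3" "\<forall>w\<in>W. fst w = x"
  shows "coll n W (x-1,0) (x+1,0)"
  using assms unfolding coll_def DD_def by auto

lemma diag:
  assumes "n = 2*m" "m \<ge> 2" "i < n"
    "\<forall>w\<in>W. snd w < n \<and> (fst w \<le> a \<longrightarrow> PP n i (snd w)) \<and> (fst w > a \<longrightarrow> \<not> PP n i (snd w))"
  shows "coll n W (a,i) (a+1, sc n i)"
  unfolding coll_def
proof (intro conjI ballI)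
  show "snd (a, i) < n" "snd (a+1, sc n i) < n" using assms sc_lt by auto
  fix w assume w: "w \<in> W"
  obtain x j where wx: "w = (x,j)" by (cases w)
  have j: "j < n" using assms(4) w wx by auto
  show "DD n (a, i) w = DD n (a + 1, sc n i) w"
  proof (cases "x \<le> a")
    case True
    then have "PP n i j" using assms(4) w wx by auto
    then show ?thesis using True unfolding wx DD_def PP_def by simp
  next
    case False
    then have "\<not> PP n i j" using assms(4) w wx by auto
    then have "cdi n (sc n i) j = cdi n i j + 1" using step_even[OF assms(1,2,3) j] by simp
    then show ?thesis using False unfolding wx DD_def by simp
  qed
qed simp

lemma F3:
  assumes "n = 2*m" "m \<ge> 2" "k < n" "\<forall>w\<in>W. snd w = k \<or> snd w = an n k"
  shows "coll n W (x, sc n k) (x, pr n k)"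
  unfolding coll_def
proof (intro conjI ballI)
  show "(x, sc n k) \<noteq> (x, pr n k)" using sc_pr[of n k] assms by auto
  show "snd (x, sc n k) < n" "snd (x, pr n k) < n" using assms sc_lt pr_lt by auto
  fix w assume w: "w \<in> W"
  obtain y j where wx: "w = (y,j)" by (cases w)
  have n3: "n \<ge> 3" using assms by auto
  from assms(4) w wx consider "j = k" | "j = an n k" by auto
  then show "DD n (x, sc n k) w = DD n (x, pr n k) w"
  proof cases
    case 1 then show ?thesis unfolding wx DD_def
      using cdi_sc[OF n3 assms(3)] cdi_pr[OF n3 assms(3)] by simp
  next
    case 2 then show ?thesis unfolding wx DD_def
      using sc_an_d[OF assms(1,2,3)] pr_an_d[OF assms(1,2,3)] by simp
  qed
qed

lemma F2:
  assumes "n = 2*m" "m \<ge> 2" "j < n" "k < n" "y \<noteq> x"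
  shows "\<exists>u v. coll n {(x,j), (x, an n j), (y,k)} u v"
proof -
  have n3: "n \<ge> 3" using assms by auto
  define \<delta> where "\<delta> = cdi n (sc n j) k - cdi n (pr n j) k"
  have dl: "\<delta> \<in> {-2,0,2}" unfolding \<delta>_def using F2_delta[OF assms(1-4)] .
  define t :: int where "t = (if \<delta> = 0 then 0 else if (\<delta> = 2) = (y > x) then 1 else -1)"
  have c1: "cdi n (sc n j) j = 1" "cdi n (pr n j) j = 1"
    using cdi_sc[OF n3 assms(3)] cdi_pr[OF n3 assms(3)] by (auto simp: cdi_sym)
  have c2: "cdi n (sc n j) (an n j) = int m - 1" "cdi n (pr n j) (an n j) = int m - 1"
    using sc_an_d[OF assms(1,2,3)] pr_an_d[OF assms(1,2,3)] by auto
  have k3: "\<bar>x + t - y\<bar> + cdi n (sc n j) k = \<bar>x - t - y\<bar> + cdi n (pr n j) k"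
    using dl assms(5) unfolding t_def \<delta>_def by auto
  have "coll n {(x,j), (x, an n j), (y,k)} (x + t, sc n j) (x - t, pr n j)"
    unfolding coll_def
  proof (intro conjI ballI)
    show "(x + t, sc n j) \<noteq> (x - t, pr n j)" using sc_pr[OF n3 assms(3)] by auto
    show "snd (x + t, sc n j) < n" "snd (x - t, pr n j) < n" using assms sc_lt pr_lt by auto
    fix w assume "w \<in> {(x,j), (x, an n j), (y,k)}"
    then show "DD n (x + t, sc n j) w = DD n (x - t, pr n j) w"
      using c1 c2 k3 unfolding DD_def by auto
  qed
  then show ?thesis by blast
qed

lemma two_sorted:
  assumes "n \<ge> 3" "snd p < n" "snd q < n" "fst p \<le> fst q"
  shows "\<exists>u v. coll n {p,q} u v"
proof -
  obtain x1 j1 x2 j2 where pq: "p = (x1,j1)" "q = (x2,j2)" by (cases p, cases q)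
  show ?thesis
  proof (cases "x1 = x2")
    case True
    then show ?thesis using col_trick[OF assms(1), of "{p,q}" x1] pq by auto
  next
    case False
    then have lt: "x1 < x2" using assms pq by auto
    show ?thesis
    proof (cases "j1 = j2")
      case True
      have "coll n {p,q} (x1, sc n j1) (x1, pr n j1)"
        unfolding coll_def using True lt pq assms sc_pr[of n j1] sc_lt[of j1 n] pr_lt[of j1 n]
          cdi_sc[of n j1] cdi_pr[of n j1] by (auto simp: DD_def)
      then show ?thesis by blast
    next
      case False
      then obtain j' where j': "j' < n" "cycle_adj n j1 j'" "cdi n j' j2 = cdi n j1 j2 - 1"
        using toward[of j1 n j2] assms pq by auto
      have "cdi n j' j1 = 1" using cdi_adj1[OF assms(1) j'(2)] cdi_sym by metis
      then have "coll n {p,q} (x1, j') (x1+1, j1)"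
        unfolding coll_def using lt pq assms j' by (auto simp: DD_def cdi_def)
      then show ?thesis by blast
    qed
  qed
qed

lemma two_any:
  assumes "n \<ge> 3" "snd p < n" "snd q < n"
  shows "\<exists>u v. coll n {p,q} u v"
proof (cases "fst p \<le> fst q")
  case True then show ?thesis using two_sorted assms by blast
next
  case False then show ?thesis using two_sorted[OF assms(1,3,2)] by (simp add: insert_commute)
qed



lemma three_sorted:
  assumes "n = 2*m" "m \<ge> 2" "snd p < n" "snd q < n" "snd r < n"
    "fst p \<le> fst q" "fst q \<le> fst r"
  shows "\<exists>u v. coll n {p,q,r} u v"
proof -
  obtain x1 j1 x2 j2 x3 j3 where pqr: "p = (x1,j1)" "q = (x2,j2)" "r = (x3,j3)"
    by (cases p, cases q, cases r)
  have j: "j1 < n" "j2 < n" "j3 < n" using assms pqr by auto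
  have x: "x1 \<le> x2" "x2 \<le> x3" using assms pqr by auto
  have n3: "n \<ge> 3" using assms by auto
  let ?W = "{p,q,r}"
  show ?thesis
  proof (cases "x1 = x3")
    case True
    then have "\<forall>w\<in>?W. fst w = x1" using x pqr by auto
    then show ?thesis using col_trick[OF n3] by blast
  next
    case nA: False
    show ?thesis
    proof (cases "x1 < x2 \<and> cdi n j2 j3 < int m")
      case True
      then obtain i where i: "i < n" "PP n i j2" "PP n i j3" using H[OF assms(1,2) j(2,3)] by blast
      show ?thesis
      proof (cases "PP n i j1")
        case True
        have "coll n ?W (x3,i) (x3+1, sc n i)"
          by (rule diag[OF assms(1,2) i(1)]) (use x i True j pqr in auto)
        then show ?thesis by blast
      next
        case False
        have a: "an n i < n" using an_lt i by auto
        have "PP n (an n i) j1" "\<not> PP n (an n i) j2" "\<not> PP n (an n i) j3"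
          using PP_an[OF assms(1,2) i(1)] j i False by auto
        then have "coll n ?W (x1, an n i) (x1+1, sc n (an n i))"
          by (intro diag[OF assms(1,2) a]) (use x j pqr \<open>x1 < x2 \<and> _\<close> in auto)
        then show ?thesis by blast
      qed
    next
      case nB: False
      show ?thesis
      proof (cases "x2 < x3 \<and> cdi n j1 j2 < int m")
        case True
        then obtain i where i: "i < n" "PP n i j1" "PP n i j2" using H[OF assms(1,2) j(1,2)] by blast
        show ?thesis
        proof (cases "PP n i j3")
          case True
          have "coll n ?W (x3,i) (x3+1, sc n i)"
            by (rule diag[OF assms(1,2) i(1)]) (use x i True j pqr in auto)
          then show ?thesis by blast
        next
          case False
          have "coll n ?W (x2,i) (x2+1, sc n i)"
            by (rule diag[OF assms(1,2) i(1)]) (use x i False j pqr \<open>x2 < x3 \<and> _\<close> in auto)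
          then show ?thesis by blast
        qed
      next
        case nC: False
        have le12: "cdi n j1 j2 \<le> int m" "cdi n j2 j3 \<le> int m"
          using cdi_le[OF assms(1)] j by auto
        consider "x1 = x2" "x2 < x3" | "x1 < x2" "x2 = x3" | "x1 < x2" "x2 < x3"
          using x nA by linarith
        then show ?thesis
        proof cases
          case 1
          then have "cdi n j1 j2 = int m" using nC le12 by auto
          then have "j2 = an n j1" using cdi_m[OF assms(1) j(1,2)] by simp
          then have "?W = {(x1,j1), (x1, an n j1), (x3,j3)}" using pqr 1 by simp
          then show ?thesis using F2[OF assms(1,2) j(1) j(3), of x3 x1] 1 by auto
        next
          case 2
          then have "cdi n j2 j3 = int m" using nB le12 by auto
          then have "j3 = an n j2" using cdi_m[OF assms(1) j(2,3)] by simp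
          then have "?W = {(x2,j2), (x2, an n j2), (x1,j1)}" using pqr 2 by auto
          then show ?thesis using F2[OF assms(1,2) j(2) j(1), of x1 x2] 2 by auto
        next
          case 3
          then have "cdi n j2 j3 = int m" "cdi n j1 j2 = int m" using nB nC le12 by auto
          then have "j3 = an n j2" "j2 = an n j1"
            using cdi_m[OF assms(1) j(2,3)] cdi_m[OF assms(1) j(1,2)] by simp_all
          moreover have "cdi n j2 j1 = int m" using \<open>cdi n j1 j2 = int m\<close> cdi_sym by metis
          ultimately have "j1 = an n j2" using cdi_m[OF assms(1) j(2,1)] by simp
          then have "\<forall>w\<in>?W. snd w = j2 \<or> snd w = an n j2" using pqr \<open>j3 = an n j2\<close> by auto
          then show ?thesis using F3[OF assms(1,2) j(2)] by blast
        qed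
      qed
    qed
  qed
qed

lemma three_any:
  assumes "n = 2*m" "m \<ge> 2" "snd p < n" "snd q < n" "snd r < n"
  shows "\<exists>u v. coll n {p,q,r} u v"
proof -
  have "{p,q,r} = {q,p,r}" "{p,q,r} = {p,r,q}" "{p,q,r} = {q,r,p}" "{p,q,r} = {r,p,q}" "{p,q,r} = {r,q,p}"
    by auto
  moreover
  have "fst p \<le> fst q \<and> fst q \<le> fst r \<or> fst q \<le> fst p \<and> fst p \<le> fst r \<or>
        fst p \<le> fst r \<and> fst r \<le> fst q \<or> fst q \<le> fst r \<and> fst r \<le> fst p \<or>
        fst r \<le> fst p \<and> fst p \<le> fst q \<or> fst r \<le> fst q \<and> fst q \<le> fst p" by linarith
  ultimately show ?thesis using three_sorted[OF assms(1,2)] assms(3-5) by metis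
qed



lemma resolves_DD:
  assumes "n \<ge> 3" "snd u < n" "snd v < n" "snd x < n"
  shows "resolves (PC_V n) (PC_adj n) x u v \<longleftrightarrow> DD n u x \<noteq> DD n v x"
  using gdist_eq[OF assms(1,2,4)] gdist_eq[OF assms(1,3,4)] DD_nonneg[of u n x] DD_nonneg[of v n x] assms
  unfolding resolves_def by auto

lemma coll_not_res:
  assumes "n \<ge> 3" "coll n S u v" "W \<subseteq> S" "resolving_set (PC_V n) (PC_adj n) W"
  shows False
proof -
  have uv: "u \<in> PC_V n" "v \<in> PC_V n" "u \<noteq> v" using assms(2) unfolding coll_def PC_V_iff by auto
  then obtain x where x: "x \<in> W" "resolves (PC_V n) (PC_adj n) x u v"
    using assms(4) unfolding resolving_set_def by blast
  have "x \<in> PC_V n" using x(1) assms(4) unfolding resolving_set_def by auto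
  then have "DD n u x \<noteq> DD n v x" using resolves_DD[OF assms(1)] x(2) uv unfolding PC_V_iff by auto
  moreover have "DD n u x = DD n v x" using assms(2,3) x(1) unfolding coll_def by auto
  ultimately show False by simp
qed

lemma small_cover:
  assumes "finite W" "card W \<le> 3" "W \<subseteq> A" "z \<in> A"
  shows "\<exists>p\<in>A. \<exists>q\<in>A. \<exists>r\<in>A. W \<subseteq> {p,q,r}"
proof -
  obtain xs where xs: "set xs = W" "distinct xs" using finite_distinct_list[OF assms(1)] by blast
  then have l: "length xs \<le> 3" using assms(2) distinct_card by metis
  then have "length xs = 0 \<or> length xs = 1 \<or> length xs = 2 \<or> length xs = 3" by arith
  then have "xs = [] \<or> (\<exists>a. xs = [a]) \<or> (\<exists>a b. xs = [a,b]) \<or> (\<exists>a b c. xs = [a,b,c])"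
    by (auto simp: numeral_eq_Suc length_Suc_conv)
  then show ?thesis using xs(1) assms(3,4) by (elim disjE exE) (simp; blast)+
qed

lemma small_cover2:
  assumes "finite W" "card W \<le> 2" "W \<subseteq> A" "z \<in> A"
  shows "\<exists>p\<in>A. \<exists>q\<in>A. W \<subseteq> {p,q}"
proof -
  obtain xs where xs: "set xs = W" "distinct xs" using finite_distinct_list[OF assms(1)] by blast
  then have l: "length xs \<le> 2" using assms(2) distinct_card by metis
  then have "length xs = 0 \<or> length xs = 1 \<or> length xs = 2" by arith
  then have "xs = [] \<or> (\<exists>a. xs = [a]) \<or> (\<exists>a b. xs = [a,b])"
    by (auto simp: numeral_eq_Suc length_Suc_conv)
  then show ?thesis using xs(1) assms(3,4) by (elim disjE exE) (simp; blast)+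
qed

lemma lower_odd:
  assumes "n \<ge> 3" "finite W" "resolving_set (PC_V n) (PC_adj n) W"
  shows "card W \<ge> 3"
proof (rule ccontr)
  assume "\<not> card W \<ge> 3"
  then have c3: "card W \<le> 2" by simp
  have wv: "W \<subseteq> PC_V n" using assms(3) unfolding resolving_set_def by auto
  have z: "(0,0) \<in> PC_V n" using assms(1) unfolding PC_V_iff by auto
  obtain p q where pq: "p \<in> PC_V n" "q \<in> PC_V n" "W \<subseteq> {p,q}"
    using small_cover2[OF assms(2) c3 wv z] by metis
  obtain u v where "coll n {p,q} u v" using two_any[OF assms(1)] pq unfolding PC_V_iff by blast
  then show False using coll_not_res[OF assms(1) _ pq(3) assms(3)] by blast
qed

lemma lower_even:
  assumes "n = 2*m" "m \<ge> 2" "finite W" "resolving_set (PC_V n) (PC_adj n) W"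
  shows "card W \<ge> 4"
proof (rule ccontr)
  have n3: "n \<ge> 3" using assms by auto
  assume "\<not> card W \<ge> 4"
  then have c3: "card W \<le> 3" by simp
  have wv: "W \<subseteq> PC_V n" using assms(4) unfolding resolving_set_def by auto
  have z: "(0,0) \<in> PC_V n" using n3 unfolding PC_V_iff by auto
  obtain p q r where pq: "p \<in> PC_V n" "q \<in> PC_V n" "r \<in> PC_V n" "W \<subseteq> {p,q,r}"
    using small_cover[OF assms(3) c3 wv z] by metis
  obtain u v where "coll n {p,q,r} u v" using three_any[OF assms(1,2)] pq unfolding PC_V_iff by blast
  then show False using coll_not_res[OF n3 _ pq(4) assms(4)] by blast
qed

lemma dim_eq:
  assumes "finite B" "resolving_set V E B" "card B = k"
    "\<And>W. finite W \<Longrightarrow> resolving_set V E W \<Longrightarrow> card W \<ge> k"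
  shows "metric_dim V E = enat k" "metric_basis V E B"
proof -
  show "metric_dim V E = enat k"
    unfolding metric_dim_def
  proof (rule antisym)
    show "Inf {enat (card W) |W. finite W \<and> resolving_set V E W} \<le> enat k"
      by (rule Inf_lower) (use assms in auto)
    show "enat k \<le> Inf {enat (card W) |W. finite W \<and> resolving_set V E W}"
      by (rule Inf_greatest) (use assms(4) in auto)
  qed
  then show "metric_basis V E B" using assms unfolding metric_basis_def by auto
qed

lemma odd_basis_res:
  assumes "n = 2*m+1" "m \<ge> 1"
  shows "resolving_set (PC_V n) (PC_adj n) {(0,0),(0,m),(1,0)}"
  unfolding resolving_set_def
proof (intro conjI ballI impI)
  have n3: "n \<ge> 3" using assms by auto
  show "{(0,0),(0,m),(1,0)} \<subseteq> PC_V n" using assms by (auto simp: PC_V_iff)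
  fix u v assume uv: "u \<in> PC_V n" "v \<in> PC_V n" "u \<noteq> v"
  obtain a i b j where e: "u = (a,i)" "v = (b,j)" by (cases u, cases v)
  have ij: "i < n" "j < n" using uv e unfolding PC_V_iff by auto
  show "\<exists>x\<in>{(0,0),(0,m),(1,0)}. resolves (PC_V n) (PC_adj n) x u v"
  proof (rule ccontr)
    assume "\<not> ?thesis"
    then have "DD n u (0,0) = DD n v (0,0)" "DD n u (0,m) = DD n v (0,m)" "DD n u (1,0) = DD n v (1,0)"
      using resolves_DD[OF n3] uv assms unfolding PC_V_iff by auto
    then have q: "\<bar>a\<bar> + cdi n i 0 = \<bar>b\<bar> + cdi n j 0" "\<bar>a\<bar> + cdi n i m = \<bar>b\<bar> + cdi n j m"
        "\<bar>a - 1\<bar> + cdi n i 0 = \<bar>b - 1\<bar> + cdi n j 0"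
      unfolding e DD_def by auto
    have "i = j" using odd_f_inj[OF assms(1) ij] q by linarith
    then have "\<bar>a\<bar> = \<bar>b\<bar>" "\<bar>a\<bar> - \<bar>a - 1\<bar> = \<bar>b\<bar> - \<bar>b - 1\<bar>" using q by auto
    then have "a = b" using side by blast
    then show False using \<open>i = j\<close> e uv by simp
  qed
qed

lemma even_basis_res:
  assumes "n = 2*m" "m \<ge> 2"
  shows "resolving_set (PC_V n) (PC_adj n) {(0,0),(0,m),(0,1),(1,0)}"
  unfolding resolving_set_def
proof (intro conjI ballI impI)
  have n3: "n \<ge> 3" using assms by auto
  show "{(0,0),(0,m),(0,1),(1,0)} \<subseteq> PC_V n" using assms by (auto simp: PC_V_iff)
  fix u v assume uv: "u \<in> PC_V n" "v \<in> PC_V n" "u \<noteq> v"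
  obtain a i b j where e: "u = (a,i)" "v = (b,j)" by (cases u, cases v)
  have ij: "i < n" "j < n" using uv e unfolding PC_V_iff by auto
  show "\<exists>x\<in>{(0,0),(0,m),(0,1),(1,0)}. resolves (PC_V n) (PC_adj n) x u v"
  proof (rule ccontr)
    assume "\<not> ?thesis"
    then have "DD n u (0,0) = DD n v (0,0)" "DD n u (0,m) = DD n v (0,m)"
        "DD n u (0,1) = DD n v (0,1)" "DD n u (1,0) = DD n v (1,0)"
      using resolves_DD[OF n3] uv assms unfolding PC_V_iff by auto
    then have q: "\<bar>a\<bar> + cdi n i 0 = \<bar>b\<bar> + cdi n j 0" "\<bar>a\<bar> + cdi n i m = \<bar>b\<bar> + cdi n j m"
        "\<bar>a\<bar> + cdi n i 1 = \<bar>b\<bar> + cdi n j 1"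
        "\<bar>a - 1\<bar> + cdi n i 0 = \<bar>b - 1\<bar> + cdi n j 0"
      unfolding e DD_def by auto
    have s: "cdi n i 0 + cdi n i m = int m" "cdi n j 0 + cdi n j m = int m"
      using even_sum[OF assms(1)] ij by auto
    have "\<bar>a\<bar> = \<bar>b\<bar>" "cdi n i 0 = cdi n j 0" using q s by linarith+
    moreover have "\<bar>a\<bar> - \<bar>a - 1\<bar> = \<bar>b\<bar> - \<bar>b - 1\<bar>" using q calculation by linarith
    ultimately have "a = b" using side by blast
    then have "cdi n i 1 = cdi n j 1" using q by simp
    then have "i = j" using even_inj[OF assms ij] \<open>cdi n i 0 = cdi n j 0\<close> by blast
    then show False using \<open>a = b\<close> e uv by simp
  qed
qed

theorem proposition7:
  fixes n :: nat
  assumes "n \<ge> 3"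
  shows "(odd n \<longrightarrow> metric_dim (PC_V n) (PC_adj n) = 3 \<and>
            metric_basis (PC_V n) (PC_adj n) {(0, 0), (0, (n - 1) div 2), (1, 0)}) \<and>
         (even n \<longrightarrow> metric_dim (PC_V n) (PC_adj n) = 4 \<and>
            metric_basis (PC_V n) (PC_adj n) {(0, 0), (0, n div 2), (0, 1), (1, 0)})"
proof (intro conjI impI)
  assume "odd n"
  define m where "m = (n - 1) div 2"
  have nm: "n = 2*m+1" "m \<ge> 1" using \<open>odd n\<close> assms unfolding m_def by (auto elim: oddE)
  have c: "card {(0::int, 0::nat), (0, m), (1, 0)} = 3" using nm by auto
  have r: "resolving_set (PC_V n) (PC_adj n) {(0, 0), (0, m), (1, 0)}" using odd_basis_res[OF nm] .
  have "metric_dim (PC_V n) (PC_adj n) = enat 3" "metric_basis (PC_V n) (PC_adj n) {(0, 0), (0, m), (1, 0)}"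
    using dim_eq[OF _ r c] lower_odd[OF assms] by auto
  then show "metric_dim (PC_V n) (PC_adj n) = 3"
    "metric_basis (PC_V n) (PC_adj n) {(0, 0), (0, (n - 1) div 2), (1, 0)}"
    unfolding m_def by (auto simp: numeral_eq_enat)
next
  assume "even n"
  define m where "m = n div 2"
  have nm: "n = 2*m" "m \<ge> 2" using \<open>even n\<close> assms unfolding m_def by auto
  have c: "card {(0::int, 0::nat), (0, m), (0, 1), (1, 0)} = 4" using nm by auto
  have r: "resolving_set (PC_V n) (PC_adj n) {(0, 0), (0, m), (0, 1), (1, 0)}" using even_basis_res[OF nm] .
  have "metric_dim (PC_V n) (PC_adj n) = enat 4" "metric_basis (PC_V n) (PC_adj n) {(0, 0), (0, m), (0, 1), (1, 0)}"
    using dim_eq[OF _ r c] lower_even[OF nm] by auto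
  then show "metric_dim (PC_V n) (PC_adj n) = 4"
    "metric_basis (PC_V n) (PC_adj n) {(0, 0), (0, n div 2), (0, 1), (1, 0)}"
    unfolding m_def by (auto simp: numeral_eq_enat)
qed

end
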